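(* Let $V\subset\mathbb R^3$ be a bounded region, $\beta,m>0$, $N\ge1$, and let $\alpha:\bar V\times[0,\lambda_0)\to(0,\infty)$, $(\mathbf x,\lambda)\mapsto\alpha(\mathbf x,\lambda)$, be smooth with $\alpha(\mathbf x,0)=1$ and $\partial_\lambda\alpha(\mathbf x,0)=0$ for all $\mathbf x$. For $\lambda=1/c>0$ put $\gamma_\lambda(\mathbf x)=\alpha(\mathbf x,\lambda)\beta m/\lambda^2$ and $$Z_\lambda=\frac{1}{N!}\left[4\pi\left(\frac{m}{2\pi\hbar\lambda}\right)^3e^{\beta m/\lambda^2}\int_V\frac{K_2(\gamma_\lambda(\mathbf x))}{\gamma_\lambda(\mathbf x)}\,d\mathbf x\right]^N,\qquad F_\lambda(\beta,V,N)=-\frac1\beta\ln Z_\lambda ,$$ where $K_2$ is the modified Bessel function of the second kind. Then $$\lim_{\lambda\to0^+}F_\lambda(\beta,V,N)=F_{\mathrm{Newt.}}(\beta,V,N):=-\frac1\beta\ln Z_{\mathrm{Newt.}},\qquad Z_{\mathrm{Newt.}}=\left(\frac{m}{2\pi\hbar^2\beta}\right)^{\frac32N}\frac{1}{N!}\left(\int_Ve^{-\frac12\beta m\,\partial_\lambda^2\alpha(\mathbf x,0)}\,d\mathbf x\right)^N .$$ *)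

theory Defs
  imports "HOL-Analysis.Analysis"
begin

text \<open>C-infinity smoothness on an open set: f is differentiable on U and every
  directional derivative (taken along a fixed vector v) is again smooth on U.\<close>
coinductive smooth_on :: "'a::euclidean_space set \<Rightarrow> ('a \<Rightarrow> real) \<Rightarrow> bool" where
  "\<lbrakk> open U; f differentiable_on U;
     \<forall>v. smooth_on U (\<lambda>x. frechet_derivative f (at x) v) \<rbrakk> \<Longrightarrow> smooth_on U f"

text \<open>Modified Bessel function of the second kind (Macdonald function), for x > 0:
  K_nu(x) = integral over t from 0 to infinity of exp(-x cosh t) cosh(nu t).\<close>
definition besselK :: "real \<Rightarrow> real \<Rightarrow> real" where
  "besselK nu x = integral {0..} (\<lambda>t. exp (- x * cosh t) * cosh (nu * t))"

end

theory Submission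
  imports Defs "HOL-Probability.Sinc_Integral" "HOL-Real_Asymp.Real_Asymp"
begin


lemma cosh_measurable[measurable]: "(cosh :: real \<Rightarrow> real) \<in> borel_measurable borel"
  by (intro borel_measurable_continuous_onI continuous_intros)

lemma cosh_lower: "cosh (u::real) \<ge> 1 + u\<^sup>2 / 4"
proof -
  have a: "cosh u \<ge> 1 + \<bar>u\<bar>\<^sup>2/4" for u :: real
  proof -
    have "1 + \<bar>u\<bar> + \<bar>u\<bar>\<^sup>2 / 2 \<le> exp \<bar>u\<bar>" by (rule exp_lower_Taylor_quadratic) simp
    moreover have "1 - \<bar>u\<bar> \<le> exp (-\<bar>u\<bar>)" using exp_ge_add_one_self[of "-\<bar>u\<bar>"] by simp
    moreover have "cosh u = (exp \<bar>u\<bar> + exp (-\<bar>u\<bar>))/2"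
      by (metis cosh_def cosh_real_abs real_scaleR_def times_divide_eq_left mult_1 divide_inverse_commute)
    ultimately show ?thesis by simp
  qed
  show ?thesis using a[of u] by simp
qed

lemma cosh_upper: "(u::real) \<ge> 0 \<Longrightarrow> cosh u \<le> exp u"
proof -
  assume "u \<ge> 0"
  then have 1: "exp (-u) \<le> exp u" by simp
  have 2: "cosh u = (exp u + exp (-u))/2" by (simp add: cosh_def)
  have 3: "\<And>a b c::real. b \<le> a \<Longrightarrow> c = (a+b)/2 \<Longrightarrow> c \<le> a" by simp
  show ?thesis by (rule 3[OF 1 2])
qed

definition kf :: "real \<Rightarrow> real \<Rightarrow> real" where
  "kf y t = indicator {0..} t * (exp (- y * cosh t) * cosh (2 * t))"

lemma kf_measurable[measurable]: "kf y \<in> borel_measurable borel"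
  unfolding kf_def by measurable

lemma kf_nonneg: "kf y t \<ge> 0"
  unfolding kf_def by (simp add: indicator_def)

lemma kf_bound:
  fixes y t :: real
  assumes y: "y > 0" and t: "t \<ge> 0"
  shows "exp (- y * cosh t) * cosh (2 * t) \<le> exp (- y + 9 / y) * exp (- t)"
proof -
  have "cosh (2*t) \<le> exp (2*t)" using t by (intro cosh_upper) simp
  then have "exp (- y * cosh t) * cosh (2 * t) \<le> exp (- y * cosh t) * exp (2*t)"
    by (intro mult_left_mono) auto
  also have "\<dots> = exp (- y * cosh t + 2*t)" by (subst mult_exp_exp) simp
  also have "\<dots> \<le> exp (- y + 9 / y - t)"
  proof -
    have c: "cosh t \<ge> 1 + t\<^sup>2/4" by (rule cosh_lower)
    have "y * (cosh t - 1) \<ge> y * (t\<^sup>2/4)" using c y by (intro mult_left_mono) auto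
    moreover have "y * (t\<^sup>2/4) - 3*t + 9/y = (y*t - 6)\<^sup>2 / (4*y)"
      using y by (simp add: field_simps power2_eq_square)
    moreover have "(y*t - 6)\<^sup>2 / (4*y) \<ge> 0" using y by simp
    ultimately have "- y * cosh t + 2*t \<le> - y + 9 / y - t" by (simp add: algebra_simps)
    then show ?thesis by simp
  qed
  also have "\<dots> = exp (- y + 9 / y) * exp (- t)" by (simp add: exp_add[symmetric])
  finally show ?thesis .
qed

lemma integrable_exp_m: "integrable lborel (\<lambda>t::real. exp (- t) * indicator {0..} t)"
  using has_bochner_integral_I0i_power_exp_m'[of 0] by (simp add: integrable.intros)

lemma kf_integrable: assumes y: "y > 0" shows "integrable lborel (kf y)"
proof -
  have 1: "integrable lborel (\<lambda>t. exp (- y + 9 / y) * (exp (- t) * indicator {0..} t))"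
    using integrable_exp_m by (rule integrable_mult_right)
  have 2: "kf y \<in> borel_measurable lborel" by simp
  have 3: "AE x in lborel. norm (kf y x) \<le> norm (exp (- y + 9 / y) * (exp (- x) * indicator {0..} x))"
    using kf_bound[OF y] kf_nonneg[of y] by (auto simp: kf_def indicator_def)
  show ?thesis by (rule Bochner_Integration.integrable_bound[OF 1 2 3])
qed

lemma besselK_kf: assumes y: "y > 0" shows "besselK 2 y = (\<integral>t. kf y t \<partial>lborel)"
proof -
  have "set_integrable lborel {0..} (\<lambda>t. exp (- y * cosh t) * cosh (2 * t))"
    using kf_integrable[OF y] unfolding set_integrable_def kf_def by simp
  from set_borel_integral_eq_integral(2)[OF this] show ?thesis
    unfolding besselK_def set_lebesgue_integral_def kf_def by simp
qed

lemma cosh_scaled_lim: "(s::real) \<ge> 0 \<Longrightarrow> ((\<lambda>y. y * (cosh (sqrt (2/y) * s) - 1)) \<longlongrightarrow> s\<^sup>2) at_top"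
proof (cases "s = 0")
  case True then show ?thesis by simp
next
  case False
  assume "s \<ge> 0"
  with False have s: "s > 0" by simp
  have "((\<lambda>y. y * (cosh (sqrt (2/y) * s) - 1)) \<longlongrightarrow> s * (s * (2 powr (1 / 2) * 2 powr (1 / 2))) / 2) at_top"
    using s unfolding cosh_field_def by real_asymp
  moreover have "s * (s * (2 powr (1 / 2) * 2 powr (1 / 2))) / 2 = s\<^sup>2"
    by (simp add: powr_add[symmetric] power2_eq_square)
  ultimately show ?thesis by simp
qed
lemma cosh_scaled_lim2: "((\<lambda>y. cosh (2 * (sqrt (2/y) * s))) \<longlongrightarrow> 1) at_top"
proof -
  have "((\<lambda>y. cosh (2 * (sqrt (2/y) * s))) \<longlongrightarrow> cosh (2 * (sqrt 0 * s))) at_top"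
    by (intro tendsto_intros) real_asymp
  then show ?thesis by simp
qed

definition G :: "real \<Rightarrow> real \<Rightarrow> real" where
  "G y s = indicator {0..} s * (exp (- y * (cosh (sqrt (2/y) * s) - 1)) * cosh (2 * (sqrt (2/y) * s)))"

lemma G_eq: assumes y: "y > 0"
  shows "sqrt y * exp y * besselK 2 y = sqrt 2 * (\<integral>s. G y s \<partial>lborel)"
proof -
  define r where "r = sqrt (2/y)"
  have r: "r > 0" using y by (simp add: r_def)
  have "besselK 2 y = \<bar>r\<bar> *\<^sub>R (\<integral>s. kf y (0 + r * s) \<partial>lborel)"
    unfolding besselK_kf[OF y] using r by (intro lborel_integral_real_affine) simp
  also have "\<dots> = r * (\<integral>s. kf y (r * s) \<partial>lborel)" using r by simp
  finally have 1: "sqrt y * exp y * besselK 2 y = (sqrt y * r) * (\<integral>s. exp y * kf y (r * s) \<partial>lborel)"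
    by (simp add: integral_mult_right_zero mult_ac)
  have 2: "sqrt y * r = sqrt 2" using y by (simp add: r_def real_sqrt_mult[symmetric])
  have 3: "exp y * kf y (r * s) = G y s" for s
  proof -
    have "indicator {0..} (r * s) = (indicator {0..} s :: real)"
      using r by (simp add: indicator_def zero_le_mult_iff)
    moreover have "exp y * exp (- y * cosh (r * s)) = exp (- y * (cosh (r * s) - 1))"
      by (subst mult_exp_exp) (simp add: algebra_simps)
    ultimately show ?thesis unfolding kf_def G_def r_def[symmetric]
      by (simp add: mult_ac)
  qed
  show ?thesis unfolding 1 2 3 ..
qed

lemma G_bound: assumes y: "y \<ge> 2"
  shows "norm (G y s) \<le> exp (9/2::real) * (exp (- s) * indicator {0..} s)"
proof (cases "s \<ge> 0")
  case False then show ?thesis by (simp add: G_def indicator_def)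
next
  case True
  define r where "r = sqrt (2/y)"
  have r: "r > 0" "r \<le> 1" using y by (auto simp: r_def)
  have yr: "y * r\<^sup>2 = 2" using y by (simp add: r_def)
  have "cosh (2 * (r * s)) \<le> exp (2 * (r * s))" using True r by (intro cosh_upper) simp
  also have "\<dots> \<le> exp (2 * s)" using True r by (simp add: mult_left_le_one_le)
  finally have c1: "cosh (2 * (r * s)) \<le> exp (2 * s)" .
  have "y * (cosh (r * s) - 1) \<ge> y * ((r * s)\<^sup>2/4)"
    using cosh_lower[of "r * s"] y by (intro mult_left_mono) auto
  also have "y * ((r * s)\<^sup>2/4) = s\<^sup>2/2" using yr by (simp add: power_mult_distrib)
  finally have c2: "exp (- y * (cosh (r * s) - 1)) \<le> exp (- (s\<^sup>2/2))" by simp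
  have "G y s = exp (- y * (cosh (r * s) - 1)) * cosh (2 * (r * s))"
    using True by (simp add: G_def r_def)
  also have "\<dots> \<le> exp (- (s\<^sup>2/2)) * exp (2 * s)"
    using c1 c2 by (intro mult_mono) auto
  also have "\<dots> = exp (- (s\<^sup>2/2) + 2 * s)" by (simp add: mult_exp_exp)
  also have "\<dots> \<le> exp (9/2 - s)"
  proof -
    have "(s - 3)\<^sup>2 \<ge> 0" by simp
    then have "- (s\<^sup>2/2) + 2 * s \<le> 9/2 - s" by (simp add: power2_eq_square algebra_simps)
    then show ?thesis by simp
  qed
  also have "\<dots> = exp (9/2::real) * (exp (- s) * indicator {0..} s)"
    using True by (simp add: mult_exp_exp indicator_def)
  finally show ?thesis using True by (simp add: G_def indicator_def)
qed

lemma G_measurable[measurable]: "G y \<in> borel_measurable borel"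
  unfolding G_def by measurable

lemma G_lim: "((\<lambda>y. G y s) \<longlongrightarrow> indicator {0..} s * exp (- s\<^sup>2)) at_top"
proof (cases "s \<ge> 0")
  case False then show ?thesis by (simp add: G_def indicator_def)
next
  case True
  have "((\<lambda>y. exp (- (y * (cosh (sqrt (2/y) * s) - 1))) * cosh (2 * (sqrt (2/y) * s))) \<longlongrightarrow> exp (- s\<^sup>2) * 1) at_top"
    by (intro tendsto_intros cosh_scaled_lim True cosh_scaled_lim2)
  then show ?thesis using True by (simp add: G_def indicator_def)
qed

lemma besselK_asymp: "((\<lambda>y. sqrt y * exp y * besselK 2 y) \<longlongrightarrow> sqrt (pi/2)) at_top"
proof -
  have lim: "((\<lambda>y. \<integral>s. G y s \<partial>lborel) \<longlongrightarrow> (\<integral>s. indicator {0..} s * exp (- s\<^sup>2) \<partial>lborel)) at_top"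
  proof (rule integral_dominated_convergence_at_top[where w="\<lambda>s. exp (9/2::real) * (exp (- s) * indicator {0..} s)"])
    show "integrable lborel (\<lambda>s. exp (9/2::real) * (exp (- s) * indicator {0..} s))"
      using integrable_exp_m by (rule integrable_mult_right)
    show "\<forall>\<^sub>F i in at_top. AE x in lborel. norm (G i x) \<le> exp (9/2::real) * (exp (- x) * indicator {0..} x)"
      using eventually_ge_at_top[of "2::real"] by eventually_elim (intro AE_I2 G_bound)
    show "AE x in lborel. ((\<lambda>i. G i x) \<longlongrightarrow> indicator {0..} x * exp (- x\<^sup>2)) at_top"
      by (auto intro: G_lim)
  qed auto
  have g: "(\<integral>s. indicator {0..} s * exp (- s\<^sup>2) \<partial>lborel) = sqrt pi / 2"
    using gaussian_moment_0 by (simp add: has_bochner_integral_iff)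
  have "((\<lambda>y. sqrt 2 * (\<integral>s. G y s \<partial>lborel)) \<longlongrightarrow> sqrt 2 * (sqrt pi / 2)) at_top"
    using lim unfolding g by (intro tendsto_intros)
  moreover have "sqrt 2 * (sqrt pi / 2) = sqrt (pi/2)"
  proof -
    have "sqrt 2 * sqrt 2 = (2::real)" by simp
    then show ?thesis by (simp add: real_sqrt_divide field_simps)
  qed
  ultimately have "((\<lambda>y. sqrt 2 * (\<integral>s. G y s \<partial>lborel)) \<longlongrightarrow> sqrt (pi/2)) at_top" by simp
  then show ?thesis
    by (rule Lim_transform_eventually)
       (use eventually_gt_at_top[of "0::real"] in \<open>eventually_elim, simp add: G_eq\<close>)
qed

lemma kf_mono: "y \<le> y' \<Longrightarrow> kf y' t \<le> kf y t"
  unfolding kf_def by (auto simp: indicator_def intro!: mult_right_mono mult_right_mono_neg)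

lemma besselK_cont: "continuous_on {0<..} (besselK 2)"
proof (rule continuous_on_sequentiallyI)
  fix u and a :: real assume u: "\<forall>n. u n \<in> {0<..}" and a: "a \<in> {0<..}" and lim: "u \<longlonglongrightarrow> a"
  have a0: "a > 0" using a by simp
  define v where "v n = max (u n) (a/2)" for n
  have vlim: "v \<longlonglongrightarrow> max a (a/2)" unfolding v_def by (intro tendsto_intros lim)
  have "max a (a/2) = a" using a0 by simp
  note vlim = vlim[unfolded this]
  have v: "v n \<ge> a/2" for n by (simp add: v_def)
  have "(\<lambda>n. \<integral>t. kf (v n) t \<partial>lborel) \<longlonglongrightarrow> (\<integral>t. kf a t \<partial>lborel)"
  proof (rule integral_dominated_convergence[where w="kf (a/2)"])
    show "integrable lborel (kf (a/2))" using a0 by (intro kf_integrable) simp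
    show "AE x in lborel. (\<lambda>n. kf (v n) x) \<longlonglongrightarrow> kf a x"
      unfolding kf_def by (intro AE_I2 tendsto_intros vlim)
    show "AE x in lborel. norm (kf (v n) x) \<le> kf (a/2) x" for n
      using kf_mono[OF v[of n]] kf_nonneg by (intro AE_I2) simp
  qed auto
  moreover have "eventually (\<lambda>n. (\<integral>t. kf (v n) t \<partial>lborel) = besselK 2 (u n)) sequentially"
  proof -
    have "eventually (\<lambda>n. u n > a/2) sequentially"
      using lim a0 by (intro order_tendstoD) auto
    then show ?thesis
    proof eventually_elim
      case (elim n) then have "v n = u n" by (simp add: v_def)
      then show ?case using elim a0 by (simp add: besselK_kf)
    qed
  qed
  ultimately have "(\<lambda>n. besselK 2 (u n)) \<longlonglongrightarrow> (\<integral>t. kf a t \<partial>lborel)"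
    by (rule Lim_transform_eventually)
  then show "(\<lambda>n. besselK 2 (u n)) \<longlonglongrightarrow> besselK 2 a" using a0 by (simp add: besselK_kf)
qed

lemma besselK_pos: "y > 0 \<Longrightarrow> besselK 2 y \<ge> 0"
  by (simp add: besselK_kf integral_nonneg_AE kf_nonneg)




lemma smooth_onD: "smooth_on U f \<Longrightarrow> open U \<and> f differentiable_on U \<and> (\<forall>v. smooth_on U (\<lambda>x. frechet_derivative f (at x) v))"
  by (erule smooth_on.cases) auto

lemma partial_deriv:
  fixes f :: "('a::euclidean_space \<times> real) \<Rightarrow> real"
  assumes U: "open U" and d: "f differentiable_on U" and xl: "(x,l) \<in> U"
  shows "((\<lambda>t. f (x,t)) has_real_derivative frechet_derivative f (at (x,l)) (0,1)) (at l)"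
proof -
  have "f differentiable (at (x,l))" using d U xl by (simp add: differentiable_on_eq_differentiable_at)
  then have D: "(f has_derivative frechet_derivative f (at (x,l))) (at (x,l))"
    by (simp add: frechet_derivative_works)
  have P: "((\<lambda>t. (x,t)) has_derivative (\<lambda>h. (0,h))) (at l)"
    by (auto intro!: derivative_eq_intros)
  have C: "((\<lambda>t. f (x,t)) has_derivative (\<lambda>h. frechet_derivative f (at (x,l)) (0,h))) (at l)"
    by (rule has_derivative_compose[OF P, simplified, OF D])
  have L: "linear (frechet_derivative f (at (x,l)))" using D by (rule has_derivative_linear)
  define c where "c = frechet_derivative f (at (x,l)) (0,1)"
  have H: "frechet_derivative f (at (x,l)) (0,h) = h * c" for h
  proof -
    have e: "(0::'a,h) = h *\<^sub>R (0,1)" by simp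
    have "frechet_derivative f (at (x,l)) (h *\<^sub>R (0::'a,1::real)) = h *\<^sub>R frechet_derivative f (at (x,l)) (0,1)"
      by (rule linear_cmul[OF L])
    then show ?thesis unfolding e[symmetric] c_def by simp
  qed
  have "(\<lambda>h. frechet_derivative f (at (x,l)) (0,h)) = (*) c"
    by (rule ext) (simp only: H mult.commute)
  with C show ?thesis unfolding c_def[symmetric] has_field_derivative_def by simp
qed

definition pd :: "(('a::euclidean_space) \<times> real \<Rightarrow> real) \<Rightarrow> 'a \<times> real \<Rightarrow> real" where
  "pd f p = frechet_derivative f (at p) (0,1)"

lemma smooth_pd: "smooth_on U f \<Longrightarrow> smooth_on U (pd f)"
  using smooth_onD[of U f] unfolding pd_def by blast

lemma smooth_cont: "smooth_on U f \<Longrightarrow> continuous_on U f"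
  using smooth_onD[of U f] differentiable_imp_continuous_on by blast

lemma smooth_open: "smooth_on U f \<Longrightarrow> open U"
  using smooth_onD[of U f] by blast

lemma smooth_deriv: "smooth_on U f \<Longrightarrow> (x,l) \<in> U \<Longrightarrow> ((\<lambda>t. f (x,t)) has_real_derivative pd f (x,l)) (at l)"
  using smooth_onD[of U f] partial_deriv[of U f x l] unfolding pd_def by blast

lemma taylor2:
  fixes f :: "('a::euclidean_space) \<times> real \<Rightarrow> real"
  assumes s: "smooth_on U f" and inU: "\<And>t. 0 \<le> t \<Longrightarrow> t \<le> h \<Longrightarrow> (x,t) \<in> U" and h: "h > 0"
    and d0: "pd f (x,0) = 0"
  shows "\<exists>\<xi>. 0 < \<xi> \<and> \<xi> < h \<and> f (x,h) = f (x,0) + pd (pd f) (x,\<xi>) / 2 * h\<^sup>2"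
proof -
  define diff :: "nat \<Rightarrow> real \<Rightarrow> real" where
    "diff m = (if m = 0 then (\<lambda>t. f (x,t)) else if m = 1 then (\<lambda>t. pd f (x,t)) else (\<lambda>t. pd (pd f) (x,t)))" for m
  have s2: "smooth_on U (pd f)" using s by (rule smooth_pd)
  have "\<exists>t. 0 < t \<and> t < h \<and>
      (\<lambda>t. f (x,t)) h = (\<Sum>m<2. (diff m 0 / fact m) * h ^ m) + (diff 2 t / fact 2) * h ^ 2"
  proof (rule Maclaurin[OF h])
    show "diff 0 = (\<lambda>t. f (x,t))" by (simp add: diff_def)
    show "\<forall>m t. m < 2 \<and> 0 \<le> t \<and> t \<le> h \<longrightarrow> (diff m has_real_derivative diff (Suc m) t) (at t)"
    proof (intro allI impI)
      fix m :: nat and t :: real assume a: "m < 2 \<and> 0 \<le> t \<and> t \<le> h"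
      then have "m = 0 \<or> m = 1" by auto
      then show "(diff m has_real_derivative diff (Suc m) t) (at t)"
        using smooth_deriv[OF s inU] smooth_deriv[OF s2 inU] a by (auto simp: diff_def)
    qed
  qed simp
  then obtain t where t: "0 < t" "t < h" "f (x,h) = (\<Sum>m<2. (diff m 0 / fact m) * h ^ m) + (diff 2 t / fact 2) * h ^ 2"
    by auto
  have "(\<Sum>m<2. (diff m 0 / fact m) * h ^ m) = f (x,0) + pd f (x,0) * h"
    by (simp add: diff_def numeral_2_eq_2)
  with t d0 show ?thesis by (intro exI[of _ t]) (simp add: diff_def)
qed

lemma second_deriv:
  fixes f :: "('a::euclidean_space) \<times> real \<Rightarrow> real"
  assumes s: "smooth_on U f" and x0: "(x,0) \<in> U"
  shows "deriv (\<lambda>l. f (x,l)) 0 = pd f (x,0)"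
    and "deriv (deriv (\<lambda>l. f (x,l))) 0 = pd (pd f) (x,0)"
proof -
  show "deriv (\<lambda>l. f (x,l)) 0 = pd f (x,0)"
    by (rule DERIV_imp_deriv[OF smooth_deriv[OF s x0]])
  have U: "open U" using s by (rule smooth_open)
  define S where "S = (\<lambda>t. (x,t)) -` U"
  have S: "open S" unfolding S_def using U by (intro continuous_open_vimage) (auto intro: continuous_intros)
  have 0: "0 \<in> S" using x0 by (simp add: S_def)
  have eq: "pd f (x,t) = deriv (\<lambda>l. f (x,l)) t" if "t \<in> S" for t
    using that by (intro DERIV_imp_deriv[symmetric] smooth_deriv[OF s]) (simp add: S_def)
  have "((\<lambda>t. pd f (x,t)) has_real_derivative pd (pd f) (x,0)) (at 0)"
    by (rule smooth_deriv[OF smooth_pd[OF s] x0])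
  then have "(deriv (\<lambda>l. f (x,l)) has_real_derivative pd (pd f) (x,0)) (at 0)"
    by (rule has_field_derivative_transform_within_open[OF _ S 0 eq])
  then show "deriv (deriv (\<lambda>l. f (x,l))) 0 = pd (pd f) (x,0)"
    by (rule DERIV_imp_deriv)
qed

lemma quot_lim:
  fixes f :: "('a::euclidean_space) \<times> real \<Rightarrow> real"
  assumes s: "smooth_on U f" and inU: "\<And>t. 0 \<le> t \<Longrightarrow> t < l0 \<Longrightarrow> (x,t) \<in> U" and l0: "l0 > 0"
    and d0: "pd f (x,0) = 0"
  shows "((\<lambda>l. (f (x,l) - f (x,0)) / l\<^sup>2) \<longlongrightarrow> pd (pd f) (x,0) / 2) (at_right 0)"
proof -
  define g where "g t = pd (pd f) (x,t)" for t
  have U: "open U" using s by (rule smooth_open)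
  have cU: "continuous_on U (pd (pd f))" using s by (intro smooth_cont smooth_pd)
  have x0: "(x,0) \<in> U" using inU l0 by simp
  have "isCont (pd (pd f)) (x,0)" using cU U x0 by (simp add: continuous_on_eq_continuous_at)
  then have cg: "isCont g 0" unfolding g_def
    by (intro continuous_intros isCont_o2[where g="pd (pd f)" and f="\<lambda>t. (x,t)", unfolded o_def]) auto
  show ?thesis
  proof (rule tendstoI)
    fix e :: real assume e: "e > 0"
    from cg have "g \<midarrow>0\<rightarrow> g 0" by (simp add: isCont_def)
    from metric_LIM_D[OF this e] obtain d where d: "d > 0" "\<And>y. y \<noteq> 0 \<and> dist y 0 < d \<Longrightarrow> dist (g y) (g 0) < e"
      by blast
    show "eventually (\<lambda>l. dist ((f (x,l) - f (x,0)) / l\<^sup>2) (pd (pd f) (x,0) / 2) < e) (at_right 0)"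
      unfolding eventually_at_right_field
    proof (intro exI[of _ "min d l0"] conjI allI impI)
      show "0 < min d l0" using d l0 by simp
      fix y :: real assume y: "0 < y" "y < min d l0"
      obtain \<xi> where xi: "0 < \<xi>" "\<xi> < y" "f (x,y) = f (x,0) + pd (pd f) (x,\<xi>) / 2 * y\<^sup>2"
        using taylor2[OF s _ y(1) d0, of ] inU y by force
      have "(f (x,y) - f (x,0)) / y\<^sup>2 = g \<xi> / 2" using xi y by (simp add: g_def)
      moreover have "dist (g \<xi>) (g 0) < e" using d(2)[of \<xi>] xi y by (simp add: dist_real_def)
      ultimately show "dist ((f (x,y) - f (x,0)) / y\<^sup>2) (pd (pd f) (x,0) / 2) < e"
        using e by (simp add: g_def dist_real_def abs_minus_commute field_simps)
    qed
  qed
qed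

lemma integral_pos_open:
  fixes H :: "'a::euclidean_space \<Rightarrow> real"
  assumes V: "bounded V" "open V" "V \<noteq> {}" and H: "H integrable_on V" and b: "\<And>x. x \<in> V \<Longrightarrow> H x \<ge> b" "b > 0"
  shows "integral V H > 0"
proof -
  have lm: "V \<in> lmeasurable" using V by (simp add: lmeasurable_open)
  obtain x0 where x0: "x0 \<in> V" using V by auto
  then obtain r where r: "r > 0" "ball x0 r \<subseteq> V" using V open_contains_ball by blast
  have "measure lebesgue (ball x0 r) \<le> measure lebesgue V"
    using r lm by (intro measure_mono_fmeasurable) auto
  moreover have "measure lebesgue (ball x0 r) = Henstock_Kurzweil_Integration.content (ball x0 r)"
    by simp
  moreover have "0 < Henstock_Kurzweil_Integration.content (ball x0 r)" by (rule content_ball_pos[OF r(1)])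
  ultimately have mpos: "measure lebesgue V > 0" by linarith
  have "integral V (\<lambda>x. b) \<le> integral V H"
    using lm H b by (intro integral_le integrable_on_const) auto
  moreover have "integral V (\<lambda>x. b) = b * measure lebesgue V"
    using lmeasure_integral[OF lm] integral_mult_right[of V b "\<lambda>x. 1"] by simp
  ultimately show ?thesis using mpos b by (smt (verit) mult_pos_pos)
qed




lemma C0_eq:
  fixes m \<beta> hbar :: real
  assumes m: "m > 0" and b: "\<beta> > 0" and hb: "hbar > 0"
  shows "4 * pi * (m / (2 * pi * hbar)) ^ 3 * sqrt (pi/2) / ((\<beta> * m) * sqrt (\<beta> * m))
       = (m / (2 * pi * hbar\<^sup>2 * \<beta>)) powr (3/2)"
proof -
  define P where "P = m / (2 * pi * hbar\<^sup>2 * \<beta>)"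
  have P: "P > 0" using m b hb by (simp add: P_def)
  have "P powr (3/2) = P powr (1 + 1/2)" by simp
  also have "\<dots> = P powr 1 * P powr (1/2)" by (rule powr_add)
  also have "\<dots> = P * sqrt P" using P by (simp add: powr_half_sqrt)
  finally have 1: "P powr (3/2) = P * sqrt P" .
  have 2: "sqrt P = sqrt m / (sqrt 2 * sqrt pi * hbar * sqrt \<beta>)"
    using hb unfolding P_def by (simp add: real_sqrt_divide real_sqrt_mult)
  have 3: "sqrt (pi/2) = sqrt pi / sqrt 2" by (simp add: real_sqrt_divide)
  have 4: "sqrt (\<beta> * m) = sqrt \<beta> * sqrt m" by (simp add: real_sqrt_mult)
  have alg: "\<And>a b p q. a > 0 \<Longrightarrow> b > 0 \<Longrightarrow> p > 0 \<Longrightarrow> q > 0 \<Longrightarrow>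
     4*p\<^sup>2*(a\<^sup>2/(2*p\<^sup>2*hbar))^3*(p/q)/(b\<^sup>2*a\<^sup>2*(b*a)) = a\<^sup>2/(2*p\<^sup>2*hbar\<^sup>2*b\<^sup>2) * (a/(q*p*hbar*b))"
    using hb by (simp add: field_simps power2_eq_square power3_eq_cube)
  have X: "4*(sqrt pi)\<^sup>2*((sqrt m)\<^sup>2/(2*(sqrt pi)\<^sup>2*hbar))^3*(sqrt pi/sqrt 2)/((sqrt \<beta>)\<^sup>2*(sqrt m)\<^sup>2*(sqrt \<beta>* sqrt m))
     = (sqrt m)\<^sup>2/(2*(sqrt pi)\<^sup>2*hbar\<^sup>2*(sqrt \<beta>)\<^sup>2) * (sqrt m/(sqrt 2* sqrt pi*hbar* sqrt \<beta>))"
    using m b by (intro alg) auto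
  have e: "(sqrt m)\<^sup>2 = m" "(sqrt \<beta>)\<^sup>2 = \<beta>" "(sqrt pi)\<^sup>2 = pi" using m b by simp_all
  show ?thesis unfolding P_def[symmetric] 1 2 3 4 unfolding P_def using X unfolding e by (simp add: mult_ac)
qed

lemma h_form:
  fixes F lam \<beta> m hbar K :: real
  assumes F: "F > 0" and l: "lam > 0" and b: "\<beta> > 0" and m: "m > 0"
  shows "4 * pi * (m / (2 * pi * hbar * lam)) ^ 3 * exp (\<beta> * m / lam\<^sup>2) * (K / (F * \<beta> * m / lam\<^sup>2))
    = 4 * pi * (m / (2 * pi * hbar)) ^ 3 * (sqrt (F * \<beta> * m / lam\<^sup>2) * exp (F * \<beta> * m / lam\<^sup>2) * K)
      * exp (- (\<beta> * m) * ((F - 1) / lam\<^sup>2)) / ((\<beta> * m) * F * sqrt ((\<beta> * m) * F))"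
proof -
  have 1: "sqrt (F * \<beta> * m / lam\<^sup>2) = sqrt ((\<beta> * m) * F) / lam"
    using l by (simp add: real_sqrt_divide mult_ac)
  have 2: "exp (F * \<beta> * m / lam\<^sup>2) * exp (- (\<beta> * m) * ((F - 1) / lam\<^sup>2)) = exp (\<beta> * m / lam\<^sup>2)"
    unfolding mult_exp_exp using l by (simp add: field_simps)
  have s: "sqrt ((\<beta> * m) * F) > 0" using F b m by simp
  have 3: "sqrt ((\<beta> * m) * F) * sqrt ((\<beta> * m) * F) = (\<beta> * m) * F" using F b m by simp
  show ?thesis unfolding 1
    using 2 s F l b m by (simp add: field_simps power3_eq_cube power2_eq_square)
qed



lemma bound_prod:
  fixes A p B E E0 D D0 :: real
  assumes "0 \<le> A" "0 \<le> p" "p \<le> B" "0 \<le> E" "E \<le> E0" "0 < D0" "D0 \<le> D"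
  shows "A * p * E / D \<le> A * B * E0 / D0"
proof -
  have "A * p * E \<le> A * B * E0" using assms by (intro mult_mono) auto
  moreover have "0 \<le> A * B * E0" using assms by auto
  ultimately show ?thesis using assms by (intro frac_le) auto
qed

theorem mainTheorem3:
  fixes V :: "(real^3) set"
    and \<alpha> :: "(real^3) \<times> real \<Rightarrow> real"
    and \<beta> m hbar lam0 :: real
    and N :: nat
  assumes V_region: "bounded V" "open V" "connected V"
    and params: "\<beta> > 0" "m > 0" "hbar > 0" "N \<ge> 1" "lam0 > 0"
    and smooth: "\<exists>U. open U \<and> closure V \<times> {0..<lam0} \<subseteq> U \<and> smooth_on U \<alpha>"
    and pos: "\<And>x l. x \<in> closure V \<Longrightarrow> 0 \<le> l \<Longrightarrow> l < lam0 \<Longrightarrow> \<alpha> (x, l) > 0"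
    and init: "\<And>x. x \<in> closure V \<Longrightarrow> \<alpha> (x, 0) = 1"
    and init_deriv: "\<And>x. x \<in> closure V \<Longrightarrow> deriv (\<lambda>l. \<alpha> (x, l)) 0 = 0"
  shows
    "((\<lambda>lam. - (1 / \<beta>) * ln ((1 / fact N) *
         (4 * pi * (m / (2 * pi * hbar * lam)) ^ 3 * exp (\<beta> * m / lam\<^sup>2) *
          integral V (\<lambda>x. besselK 2 (\<alpha> (x, lam) * \<beta> * m / lam\<^sup>2)
                          / (\<alpha> (x, lam) * \<beta> * m / lam\<^sup>2))) ^ N))
      \<longlongrightarrow> - (1 / \<beta>) * ln ((m / (2 * pi * hbar\<^sup>2 * \<beta>)) powr (3 / 2 * real N) * (1 / fact N) *
             (integral V (\<lambda>x. exp (- (1/2) * \<beta> * m *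
                  deriv (deriv (\<lambda>l. \<alpha> (x, l))) 0))) ^ N))
     (at_right 0)"
proof (cases "V = {}")
  case True
  then show ?thesis using params by (simp add: power_0_left)
next
  case False
  obtain U where U: "open U" "closure V \<times> {0..<lam0} \<subseteq> U" "smooth_on U \<alpha>" using smooth by blast
  have b: "\<beta> > 0" and m: "m > 0" and hb: "hbar > 0" and l0: "lam0 > 0" using params by auto
  define c where "c = \<beta> * m"
  have c: "c > 0" using b m by (simp add: c_def)
  define A where "A = 4 * pi * (m / (2 * pi * hbar)) ^ 3"
  have A: "A > 0" using m hb by (simp add: A_def)
  define C0 where "C0 = A * sqrt (pi/2) / (c * sqrt c)"
  have C0: "C0 > 0" using A c by (simp add: C0_def)
  define \<phi> where "\<phi> y = sqrt y * exp y * besselK 2 y" for y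
  define h where "h lam x = 4 * pi * (m / (2 * pi * hbar * lam)) ^ 3 * exp (\<beta> * m / lam\<^sup>2) *
      (besselK 2 (\<alpha> (x, lam) * \<beta> * m / lam\<^sup>2) / (\<alpha> (x, lam) * \<beta> * m / lam\<^sup>2))" for lam x
  define H where "H x = C0 * exp (- (1/2) * \<beta> * m * pd (pd \<alpha>) (x,0))" for x
  have inU: "(x,t) \<in> U" if "x \<in> closure V" "0 \<le> t" "t < lam0" for x t using U(2) that by auto
  have d0: "pd \<alpha> (x,0) = 0" if "x \<in> closure V" for x
    using second_deriv(1)[OF U(3) inU[OF that]] init_deriv[OF that] l0 by simp
  have dd: "deriv (deriv (\<lambda>l. \<alpha> (x, l))) 0 = pd (pd \<alpha>) (x,0)" if "x \<in> closure V" for x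
    using second_deriv(2)[OF U(3) inU[OF that]] l0 by simp
  have sm2: "smooth_on U (pd (pd \<alpha>))" using U(3) by (intro smooth_pd)
  define K where "K = closure V \<times> {0..lam0/2}"
  have Kc: "compact K" unfolding K_def using V_region by (intro compact_Times) (auto simp: compact_closure)
  have Kne: "K \<noteq> {}" unfolding K_def using False l0 by auto
  have KU: "K \<subseteq> U" unfolding K_def using U(2) l0 by auto
  have Kin: "(x,t) \<in> K" if "x \<in> closure V" "0 \<le> t" "t \<le> lam0/2" for x t using that by (simp add: K_def)
  obtain p0 where p0: "p0 \<in> K" "\<And>p. p \<in> K \<Longrightarrow> \<alpha> p0 \<le> \<alpha> p"
    using continuous_attains_inf[OF Kc Kne continuous_on_subset[OF smooth_cont[OF U(3)] KU]] by blast
  define a0 where "a0 = \<alpha> p0"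
  have a0: "a0 > 0" using p0(1) l0 unfolding a0_def K_def by (cases p0) (auto intro!: pos)
  have a0le: "a0 \<le> \<alpha> (x,t)" if "x \<in> closure V" "0 \<le> t" "t \<le> lam0/2" for x t
    using p0(2)[OF Kin[OF that]] by (simp add: a0_def)
  have cabs: "continuous_on K (\<lambda>p. \<bar>pd (pd \<alpha>) p\<bar>)"
    by (intro continuous_intros continuous_on_subset[OF smooth_cont[OF sm2] KU])
  obtain p1 where p1: "p1 \<in> K" "\<And>p. p \<in> K \<Longrightarrow> \<bar>pd (pd \<alpha>) p\<bar> \<le> \<bar>pd (pd \<alpha>) p1\<bar>"
    using continuous_attains_sup[OF Kc Kne cabs] by blast
  define M where "M = \<bar>pd (pd \<alpha>) p1\<bar>"
  have Mb: "\<bar>pd (pd \<alpha>) (x,t)\<bar> \<le> M" if "x \<in> closure V" "0 \<le> t" "t \<le> lam0/2" for x t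
    using p1(2)[OF Kin[OF that]] by (simp add: M_def)
  have "eventually (\<lambda>y. \<phi> y < sqrt (pi/2) + 1) at_top"
    using besselK_asymp unfolding \<phi>_def[symmetric] by (intro order_tendstoD(2)) auto
  then obtain \<Gamma> where \<Gamma>: "\<And>y. y \<ge> \<Gamma> \<Longrightarrow> \<phi> y < sqrt (pi/2) + 1"
    unfolding eventually_at_top_linorder by blast
  define \<Gamma>' where "\<Gamma>' = max \<Gamma> 1"
  have \<Gamma>': "\<Gamma>' > 0" "\<Gamma>' \<ge> \<Gamma>" by (auto simp: \<Gamma>'_def)
  define l2 where "l2 = min (lam0/2) (sqrt (c * a0 / \<Gamma>'))"
  have l2: "l2 > 0" using l0 c a0 \<Gamma>' by (simp add: l2_def)
  have l2le: "l2 \<le> lam0/2" by (simp add: l2_def)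
  have Vc: "x \<in> closure V" if "x \<in> V" for x using that closure_subset by blast
  have form: "h lam x = A * \<phi> (\<alpha> (x, lam) * \<beta> * m / lam\<^sup>2) * exp (- c * ((\<alpha> (x,lam) - 1) / lam\<^sup>2))
      / (c * \<alpha> (x,lam) * sqrt (c * \<alpha> (x,lam)))"
     if "x \<in> closure V" "0 < lam" "lam < lam0" for x lam
    unfolding h_def A_def c_def \<phi>_def
    by (rule h_form[OF pos[OF that(1) _ that(3)] that(2) b m]) (use that in simp)
  define W where "W = A * (sqrt (pi/2) + 1) * exp (c * M / 2) / (c * a0 * sqrt (c * a0))"
  have hbound: "0 \<le> h lam x \<and> h lam x \<le> W" if x: "x \<in> V" and lam: "0 < lam" "lam < l2" for x lam
  proof -
    have xc: "x \<in> closure V" using x by (rule Vc)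
    have lam0': "lam < lam0" "lam \<le> lam0/2" using lam l2le l0 by auto
    define F where "F = \<alpha> (x, lam)"
    have F: "F \<ge> a0" using a0le[OF xc _ lam0'(2)] lam by (simp add: F_def)
    have Fp: "F > 0" using F a0 by simp
    have "lam < sqrt (c * a0 / \<Gamma>')" using lam by (simp add: l2_def)
    then have "lam\<^sup>2 < (sqrt (c * a0 / \<Gamma>'))\<^sup>2" using lam by (intro power_strict_mono) auto
    then have "lam\<^sup>2 < c * a0 / \<Gamma>'" using c a0 \<Gamma>' by simp
    then have "\<Gamma>' * lam\<^sup>2 < c * a0" using \<Gamma>' by (simp add: field_simps)
    also have "\<dots> \<le> c * F" using F c by simp
    finally have gg: "\<Gamma>' < c * F / lam\<^sup>2" using lam by (simp add: field_simps)
    have eqc: "F * \<beta> * m / lam\<^sup>2 = c * F / lam\<^sup>2" by (simp add: c_def mult_ac)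
    have g: "F * \<beta> * m / lam\<^sup>2 > \<Gamma>'" unfolding eqc by (rule gg)
    have gpos: "F * \<beta> * m / lam\<^sup>2 > 0" using g \<Gamma>' by simp
    have phi: "\<phi> (F * \<beta> * m / lam\<^sup>2) \<le> sqrt (pi/2) + 1" using \<Gamma>[of "F * \<beta> * m / lam\<^sup>2"] g \<Gamma>' by simp
    have phi0: "\<phi> (F * \<beta> * m / lam\<^sup>2) \<ge> 0" using gpos besselK_pos[OF gpos] by (simp add: \<phi>_def)
    obtain \<xi> where xi: "0 < \<xi>" "\<xi> < lam" "\<alpha> (x,lam) = \<alpha> (x,0) + pd (pd \<alpha>) (x,\<xi>) / 2 * lam\<^sup>2"
      using taylor2[OF U(3) _ lam(1) d0[OF xc]] inU[OF xc] lam0' by force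
    have q: "(F - 1) / lam\<^sup>2 = pd (pd \<alpha>) (x,\<xi>) / 2" using xi init[OF xc] lam by (simp add: F_def)
    have "\<bar>pd (pd \<alpha>) (x,\<xi>)\<bar> \<le> M" using Mb[OF xc] xi lam0' by simp
    then have "- ((F - 1) / lam\<^sup>2) \<le> M / 2" unfolding q by linarith
    then have "c * (- ((F - 1) / lam\<^sup>2)) \<le> c * (M / 2)" using c by (intro mult_left_mono) auto
    then have "- c * ((F - 1) / lam\<^sup>2) \<le> c * M / 2" by simp
    then have E: "exp (- c * ((F - 1) / lam\<^sup>2)) \<le> exp (c * M / 2)" by simp
    have D: "c * a0 * sqrt (c * a0) \<le> c * F * sqrt (c * F)"
      using F c a0 by (intro mult_mono) auto
    have "h lam x = A * \<phi> (F * \<beta> * m / lam\<^sup>2) * exp (- c * ((F - 1) / lam\<^sup>2)) / (c * F * sqrt (c * F))"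
      unfolding F_def by (rule form[OF xc lam(1) lam0'(1)])
    moreover have "\<dots> \<le> W" unfolding W_def
      using A phi phi0 E D c a0 by (intro bound_prod) auto
    moreover have "0 \<le> A * \<phi> (F * \<beta> * m / lam\<^sup>2) * exp (- c * ((F - 1) / lam\<^sup>2)) / (c * F * sqrt (c * F))"
      using A phi0 Fp c by simp
    ultimately show ?thesis by simp
  qed
  have hcont: "continuous_on V (h lam)" if lam: "0 < lam" "lam < lam0" for lam
  proof -
    have ca: "continuous_on V (\<lambda>x. \<alpha> (x, lam))"
      by (rule continuous_on_compose2[OF smooth_cont[OF U(3)]]) (use lam inU Vc in \<open>auto intro!: continuous_intros\<close>)
    have gp: "\<alpha> (x, lam) * \<beta> * m / lam\<^sup>2 > 0" if "x \<in> V" for x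
      using pos[OF Vc[OF that] _ lam(2)] lam b m by simp
    have cg: "continuous_on V (\<lambda>x. \<alpha> (x, lam) * \<beta> * m / lam\<^sup>2)"
      by (intro continuous_intros ca) (use lam in simp)
    have cb: "continuous_on V (\<lambda>x. besselK 2 (\<alpha> (x, lam) * \<beta> * m / lam\<^sup>2))"
      by (rule continuous_on_compose2[OF besselK_cont cg]) (use gp in auto)
    have "continuous_on V (\<lambda>x. besselK 2 (\<alpha> (x, lam) * \<beta> * m / lam\<^sup>2) / (\<alpha> (x, lam) * \<beta> * m / lam\<^sup>2))"
      by (rule continuous_on_divide[OF cb cg]) (use gp in fastforce)
    then show ?thesis unfolding h_def by (rule continuous_on_mult_left)
  qed
  have Vl: "V \<in> lmeasurable" using V_region by (simp add: lmeasurable_open)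
  have Vs: "V \<in> sets lebesgue" using Vl by (simp add: fmeasurableD)
  have hint: "h lam integrable_on V" if lam: "0 < lam" "lam < l2" for lam
  proof (rule measurable_bounded_by_integrable_imp_integrable_real[where g="\<lambda>x. W"])
    show "h lam \<in> borel_measurable (lebesgue_on V)"
      using lam l2le l0 by (intro continuous_imp_measurable_on_sets_lebesgue hcont Vs) auto
    show "(\<lambda>x. W) integrable_on V" using Vl by (rule integrable_on_const)
    show "\<bar>h lam x\<bar> \<le> W" if "x \<in> V" for x using hbound[OF that lam] by simp
  qed (rule Vs)
  have plim: "((\<lambda>lam. h lam x) \<longlongrightarrow> H x) (at_right 0)" if x: "x \<in> V" for x
  proof -
    have xc: "x \<in> closure V" using x by (rule Vc)
    have x0U: "(x,0) \<in> U" using inU[OF xc] l0 by simp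
    have ic: "isCont \<alpha> (x,0)" using smooth_cont[OF U(3)] U(1) x0U by (simp add: continuous_on_eq_continuous_at)
    have "((\<lambda>lam. (x,lam)) \<longlongrightarrow> (x,0)) (at_right (0::real))" by (intro tendsto_intros)
    from isCont_tendsto_compose[OF ic this] have Fl: "((\<lambda>lam. \<alpha> (x, lam)) \<longlongrightarrow> 1) (at_right 0)"
      using init[OF xc] by simp
    have Ql: "((\<lambda>lam. (\<alpha> (x,lam) - 1) / lam\<^sup>2) \<longlongrightarrow> pd (pd \<alpha>) (x,0) / 2) (at_right 0)"
      using quot_lim[OF U(3) inU[OF xc] l0 d0[OF xc]] init[OF xc] by simp
    have inv: "filterlim (\<lambda>lam::real. 1 / lam\<^sup>2) at_top (at_right 0)" by real_asymp
    have tl: "((\<lambda>lam. \<alpha> (x, lam) * \<beta> * m) \<longlongrightarrow> 1 * \<beta> * m) (at_right 0)"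
      by (intro tendsto_intros Fl)
    have gl: "filterlim (\<lambda>lam. \<alpha> (x, lam) * \<beta> * m * (1 / lam\<^sup>2)) at_top (at_right 0)"
      by (rule filterlim_tendsto_pos_mult_at_top[OF tl _ inv]) (use b m in simp)
    have "(\<lambda>lam. \<alpha> (x, lam) * \<beta> * m * (1 / lam\<^sup>2)) = (\<lambda>lam. \<alpha> (x, lam) * \<beta> * m / lam\<^sup>2)"
      by (simp add: fun_eq_iff)
    with gl have gl': "filterlim (\<lambda>lam. \<alpha> (x, lam) * \<beta> * m / lam\<^sup>2) at_top (at_right 0)" by simp
    have phil: "((\<lambda>lam. \<phi> (\<alpha> (x, lam) * \<beta> * m / lam\<^sup>2)) \<longlongrightarrow> sqrt (pi/2)) (at_right 0)"
      using filterlim_compose[OF besselK_asymp gl'] by (simp add: \<phi>_def)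
    have lim2: "((\<lambda>lam. A * \<phi> (\<alpha> (x, lam) * \<beta> * m / lam\<^sup>2) * exp (- c * ((\<alpha> (x,lam) - 1) / lam\<^sup>2))
      / (c * \<alpha> (x,lam) * sqrt (c * \<alpha> (x,lam)))) \<longlongrightarrow>
        A * sqrt (pi/2) * exp (- c * (pd (pd \<alpha>) (x,0) / 2)) / (c * 1 * sqrt (c * 1))) (at_right 0)"
      by (intro tendsto_intros phil Ql Fl) (use c in simp)
    have e: "- c * (pd (pd \<alpha>) (x,0) / 2) = - (1/2) * \<beta> * m * pd (pd \<alpha>) (x,0)" unfolding c_def by simp
    have Heq: "A * sqrt (pi/2) * exp (- c * (pd (pd \<alpha>) (x,0) / 2)) / (c * 1 * sqrt (c * 1)) = H x"
      unfolding H_def C0_def e by simp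
    have ev: "eventually (\<lambda>lam. A * \<phi> (\<alpha> (x, lam) * \<beta> * m / lam\<^sup>2) * exp (- c * ((\<alpha> (x,lam) - 1) / lam\<^sup>2))
      / (c * \<alpha> (x,lam) * sqrt (c * \<alpha> (x,lam))) = h lam x) (at_right 0)"
      unfolding eventually_at_right_field using l0 form[OF xc] by (intro exI[of _ lam0]) auto
    show ?thesis using Lim_transform_eventually[OF lim2 ev] unfolding Heq .
  qed
  have Hbound: "C0 * exp (- (c * M / 2)) \<le> H x \<and> H x \<le> C0 * exp (c * M / 2)" if x: "x \<in> V" for x
  proof -
    have "\<bar>pd (pd \<alpha>) (x,0)\<bar> \<le> M" using Mb[OF Vc[OF x]] l0 by simp
    then have "\<bar>(1/2) * c * pd (pd \<alpha>) (x,0)\<bar> \<le> c * M / 2" using c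
      by (simp add: abs_mult mult_left_mono)
    then have "- (c * M / 2) \<le> - (1/2) * \<beta> * m * pd (pd \<alpha>) (x,0) \<and> - (1/2) * \<beta> * m * pd (pd \<alpha>) (x,0) \<le> c * M / 2"
      unfolding c_def by (simp add: abs_le_iff mult_ac)
    then show ?thesis unfolding H_def using C0 by (simp add: mult_left_mono)
  qed
  have Hcont: "continuous_on V H"
  proof -
    have "continuous_on V (\<lambda>x. pd (pd \<alpha>) (x,0))"
      by (rule continuous_on_compose2[OF smooth_cont[OF sm2]]) (use l0 inU Vc in \<open>auto intro!: continuous_intros\<close>)
    then show ?thesis unfolding H_def by (intro continuous_intros)
  qed
  have Hint: "H integrable_on V"
  proof (rule measurable_bounded_by_integrable_imp_integrable_real[where g="\<lambda>x. C0 * exp (c * M / 2)"])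
    show "H \<in> borel_measurable (lebesgue_on V)"
      by (intro continuous_imp_measurable_on_sets_lebesgue Hcont Vs)
    show "(\<lambda>x. C0 * exp (c * M / 2)) integrable_on V" using Vl by (rule integrable_on_const)
    show "\<bar>H x\<bar> \<le> C0 * exp (c * M / 2)" if "x \<in> V" for x using Hbound[OF that] C0
      by (smt (verit) exp_gt_zero mult_pos_pos)
  qed (rule Vs)
  have IHpos: "integral V H > 0"
    by (rule integral_pos_open[OF V_region(1,2) False Hint, of "C0 * exp (- (c * M / 2))"])
       (use Hbound C0 in auto)
  have Ilim: "((\<lambda>lam. integral V (h lam)) \<longlongrightarrow> integral V H) (at_right 0)"
  proof (rule tendsto_at_right_sequentially[OF l2])
    fix S :: "nat \<Rightarrow> real" assume S: "\<And>n. 0 < S n" "\<And>n. S n < l2" "S \<longlonglongrightarrow> 0"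
    have fS: "filterlim S (at_right 0) sequentially"
      using S by (intro tendsto_imp_filterlim_at_right) (auto intro: always_eventually)
    show "(\<lambda>n. integral V (h (S n))) \<longlonglongrightarrow> integral V H"
    proof (rule dominated_convergence(2)[where h="\<lambda>x. W"])
      show "h (S k) integrable_on V" for k using hint S by blast
      show "(\<lambda>x. W) integrable_on V" using Vl by (rule integrable_on_const)
      show "norm (h (S k) x) \<le> W" if "x \<in> V" for k x using hbound[OF that S(1) S(2)] by simp
      show "(\<lambda>k. h (S k) x) \<longlonglongrightarrow> H x" if "x \<in> V" for x
        using filterlim_compose[OF plim[OF that] fS] .
    qed
  qed
  define J where "J = integral V (\<lambda>x. exp (- (1/2) * \<beta> * m * deriv (deriv (\<lambda>l. \<alpha> (x, l))) 0))"
  have IHJ: "integral V H = C0 * J"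
  proof -
    have "integral V H = integral V (\<lambda>x. C0 * exp (- (1/2) * \<beta> * m * deriv (deriv (\<lambda>l. \<alpha> (x, l))) 0))"
      by (rule integral_cong) (simp add: H_def dd[OF Vc])
    also have "\<dots> = C0 * J" unfolding J_def by (rule integral_mult_right)
    finally show ?thesis .
  qed
  define P where "P = m / (2 * pi * hbar\<^sup>2 * \<beta>)"
  have P: "P > 0" using m b hb by (simp add: P_def)
  have C0P: "C0 = P powr (3/2)"
    unfolding C0_def A_def c_def P_def by (rule C0_eq[OF m b hb])
  have C0N: "C0 ^ N = P powr (3 / 2 * real N)"
    unfolding C0P using P by (simp add: powr_realpow[symmetric] powr_powr)
  have LHSeq: "4 * pi * (m / (2 * pi * hbar * lam)) ^ 3 * exp (\<beta> * m / lam\<^sup>2) *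
          integral V (\<lambda>x. besselK 2 (\<alpha> (x, lam) * \<beta> * m / lam\<^sup>2) / (\<alpha> (x, lam) * \<beta> * m / lam\<^sup>2))
        = integral V (h lam)" for lam
    unfolding h_def by (rule integral_mult_right[symmetric])
  have RHSeq: "(1 / fact N) * (integral V H) ^ N = P powr (3 / 2 * real N) * (1 / fact N) * J ^ N"
    unfolding IHJ power_mult_distrib C0N by simp
  have "((\<lambda>lam. - (1 / \<beta>) * ln ((1 / fact N) * (integral V (h lam)) ^ N)) \<longlongrightarrow>
        - (1 / \<beta>) * ln ((1 / fact N) * (integral V H) ^ N)) (at_right 0)"
    by (intro tendsto_intros Ilim) (use IHpos in simp)
  then show ?thesis unfolding LHSeq RHSeq P_def J_def .
qed

end
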